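(* Let $A$ be an integral domain and let $\mathfrak{p}$ be a prime ideal of $A$. Then $\mathfrak{p}$ is a straight prime ideal of $A$ if and only if $\mathfrak{p}$ is a locally divided prime ideal of $A$, i.e. if and only if $\mathfrak{p}A_\mathfrak{m} = \mathfrak{p}A_\mathfrak{p}$ for every maximal ideal $\mathfrak{m}$ of $A$ containing $\mathfrak{p}$.
   Context: All rings are commutative with identity. An overring of a domain $A$ is a ring $B$ with $A\subseteq B\subseteq \operatorname{Frac}(A)$. A prime ideal $\mathfrak{p}$ of a domain $A$ is divided if $\mathfrak{p}=\mathfrak{p}A_\mathfrak{p}$. It is locally divided if $\mathfrak{p}A_\mathfrak{m}$ is a divided prime of $A_\mathfrak{m}$ for every maximal ideal $\mathfrak{m}\supseteq\mathfrak{p}$, equivalently $\mathfrak{p}A_\mathfrak{m}=\mathfrak{p}A_\mathfrak{p}$ for all such $\mathfrak{m}$. A prime ideal $\mathfrak{p}$ of $A$ is straight (and $A$ is said to be straight at $\mathfrak{p}$) if for every overring $B$ of $A$, the $(A/\mathfrak{p})$-module $B/\mathfrak{p}B$ is torsion-free. *)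

theory Defs
  imports "HOL-Computational_Algebra.Fraction_Field"
begin

text \<open>The integral domain A is the whole type 'a (class idom); Frac(A) is the type 'a fract.
  Ideals of A are subsets of 'a; overrings and localizations are subsets of 'a fract.\<close>

definition emb :: "'a::idom \<Rightarrow> 'a fract" where
  "emb a = Fract a 1"

definition is_ideal :: "'a::comm_ring_1 set \<Rightarrow> bool" where
  "is_ideal I \<longleftrightarrow> 0 \<in> I \<and> (\<forall>x\<in>I. \<forall>y\<in>I. x + y \<in> I) \<and> (\<forall>x\<in>I. \<forall>r. r * x \<in> I)"

definition prime_ideal :: "'a::comm_ring_1 set \<Rightarrow> bool" where
  "prime_ideal P \<longleftrightarrow> is_ideal P \<and> P \<noteq> UNIV \<and> (\<forall>a b. a * b \<in> P \<longrightarrow> a \<in> P \<or> b \<in> P)"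

definition maximal_ideal :: "'a::comm_ring_1 set \<Rightarrow> bool" where
  "maximal_ideal M \<longleftrightarrow> is_ideal M \<and> M \<noteq> UNIV \<and>
     (\<forall>J. is_ideal J \<and> M \<subseteq> J \<longrightarrow> J = M \<or> J = UNIV)"

definition overring :: "'a::idom fract set \<Rightarrow> bool" where
  "overring B \<longleftrightarrow> range emb \<subseteq> B \<and> 0 \<in> B \<and> 1 \<in> B \<and>
     (\<forall>x\<in>B. \<forall>y\<in>B. x + y \<in> B \<and> x * y \<in> B) \<and> (\<forall>x\<in>B. - x \<in> B)"

definition ext_ideal :: "'a::idom set \<Rightarrow> 'a fract set \<Rightarrow> 'a fract set" where
  "ext_ideal P B = {\<Sum>i<n. emb (a i) * b i | (n::nat) a b. \<forall>i<n. a i \<in> P \<and> b i \<in> B}"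

definition localization :: "'a::idom set \<Rightarrow> 'a fract set" where
  "localization Q = {Fract a s | a s. s \<notin> Q}"

text \<open>Straight: for every overring B, B/PB is a torsion-free (A/P)-module, i.e. for
  a \<notin> P and b \<in> B, a b \<in> PB implies b \<in> PB.\<close>
definition straight :: "'a::idom set \<Rightarrow> bool" where
  "straight P \<longleftrightarrow> (\<forall>B. overring B \<longrightarrow>
     (\<forall>a b. a \<notin> P \<longrightarrow> b \<in> B \<longrightarrow> emb a * b \<in> ext_ideal P B \<longrightarrow> b \<in> ext_ideal P B))"

definition locally_divided :: "'a::idom set \<Rightarrow> bool" where
  "locally_divided P \<longleftrightarrow> (\<forall>M. maximal_ideal M \<and> P \<subseteq> M \<longrightarrow>
     ext_ideal P (localization M) = ext_ideal P (localization P))"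

end

theory Submission
  imports Defs "HOL-Computational_Algebra.Polynomial"
begin


abbreviation FR :: "'a::idom \<Rightarrow> 'a \<Rightarrow> 'a fract" where "FR \<equiv> Fraction_Field.Fract"

lemma ext_iff: "x \<in> ext_ideal P B \<longleftrightarrow> (\<exists>(n::nat) a b. x = (\<Sum>i<n. emb (a i) * b i) \<and> (\<forall>i<n. a i \<in> P \<and> b i \<in> B))"
  unfolding ext_ideal_def by auto

lemma ext_0: "0 \<in> ext_ideal P B"
  unfolding ext_ideal_def by (rule CollectI, rule exI[of _ 0]) auto

lemma ext_gen: "a \<in> P \<Longrightarrow> b \<in> B \<Longrightarrow> emb a * b \<in> ext_ideal P B"
  unfolding ext_ideal_def
  by (rule CollectI, rule exI[of _ 1], rule exI[of _ "\<lambda>_. a"], rule exI[of _ "\<lambda>_. b"]) auto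

lemma ext_add_gen:
  assumes "x \<in> ext_ideal P B" "c \<in> P" "d \<in> B"
  shows "x + emb c * d \<in> ext_ideal P B"
proof -
  obtain n :: nat and a b where x: "x = (\<Sum>i<n. emb (a i) * b i)" and ab: "\<forall>i<n. a i \<in> P \<and> b i \<in> B"
    using assms(1) unfolding ext_iff by blast
  have "x + emb c * d = (\<Sum>i<Suc n. emb ((a(n:=c)) i) * (b(n:=d)) i)"
    unfolding x by (simp add: sum.lessThan_Suc)
  moreover have "\<forall>i<Suc n. (a(n:=c)) i \<in> P \<and> (b(n:=d)) i \<in> B"
    using ab assms by (auto simp: less_Suc_eq)
  ultimately show ?thesis unfolding ext_iff by blast
qed

lemma ext_induct[consumes 1, case_names zero gen add]:
  assumes "x \<in> ext_ideal P B"
    and "Q 0"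
    and "\<And>a b. a \<in> P \<Longrightarrow> b \<in> B \<Longrightarrow> Q (emb a * b)"
    and "\<And>x y. Q x \<Longrightarrow> Q y \<Longrightarrow> Q (x + y)"
  shows "Q x"
proof -
  obtain n :: nat and a b where x: "x = (\<Sum>i<n. emb (a i) * b i)" and ab: "\<forall>i<n. a i \<in> P \<and> b i \<in> B"
    using assms(1) unfolding ext_iff by blast
  have "\<forall>m\<le>n. Q (\<Sum>i<m. emb (a i) * b i)"
  proof (intro allI impI)
    fix m assume "m \<le> n"
    then show "Q (\<Sum>i<m. emb (a i) * b i)"
    proof (induction m)
      case 0 then show ?case using assms(2) by simp
    next
      case (Suc m)
      then show ?case using assms(3,4) ab by (simp add: sum.lessThan_Suc)
    qed
  qed
  then show ?thesis using x by simp
qed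

lemma ext_add:
  assumes "x \<in> ext_ideal P B" "y \<in> ext_ideal P B"
  shows "x + y \<in> ext_ideal P B"
proof -
  have "\<forall>x\<in>ext_ideal P B. x + y \<in> ext_ideal P B"
    using assms(2)
  proof (induction rule: ext_induct)
    case zero then show ?case by simp
  next
    case (gen a b) then show ?case using ext_add_gen by blast
  next
    case (add u v)
    show ?case
    proof
      fix x assume "x \<in> ext_ideal P B"
      then have "x + u \<in> ext_ideal P B" using add by blast
      then have "(x + u) + v \<in> ext_ideal P B" using add by blast
      then show "x + (u + v) \<in> ext_ideal P B" by (simp add: add.assoc)
    qed
  qed
  then show ?thesis using assms(1) by blast
qed

lemma ext_sum:
  assumes "finite S" "\<forall>i\<in>S. f i \<in> ext_ideal P B"
  shows "sum f S \<in> ext_ideal P B"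
  using assms by (induction S rule: finite_induct) (auto intro: ext_0 ext_add)

lemma ext_mult:
  assumes "x \<in> ext_ideal P B" "c \<in> B" "\<forall>u\<in>B. \<forall>v\<in>B. u * v \<in> B"
  shows "x * c \<in> ext_ideal P B"
  using assms(1)
proof (induction rule: ext_induct)
  case zero then show ?case by (simp add: ext_0)
next
  case (gen a b)
  have "emb a * b * c = emb a * (b * c)" by (simp add: mult.assoc)
  then show ?case using gen assms ext_gen by metis
next
  case (add x y) then show ?case by (simp add: distrib_right ext_add)
qed

lemma ext_mono:
  assumes "B \<subseteq> C"
  shows "ext_ideal P B \<subseteq> ext_ideal P C"
proof
  fix x assume "x \<in> ext_ideal P B"
  then obtain n :: nat and a b where "x = (\<Sum>i<n. emb (a i) * b i)" "\<forall>i<n. a i \<in> P \<and> b i \<in> B"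
    unfolding ext_iff by blast
  then show "x \<in> ext_ideal P C" unfolding ext_iff using assms by blast
qed

lemma emb_0[simp]: "emb 0 = 0" by (simp add: emb_def fract_collapse)
lemma emb_1[simp]: "emb 1 = 1" by (simp add: emb_def fract_collapse)
lemma emb_add: "emb (x + y) = emb x + emb y" by (simp add: emb_def)
lemma emb_mult: "emb (x * y) = emb x * emb y" by (simp add: emb_def)
lemma emb_Fract: "emb a * FR c s = FR (a * c) s" by (simp add: emb_def)

subsection \<open>Ideals\<close>

lemma ideal_0: "is_ideal I \<Longrightarrow> 0 \<in> I" by (simp add: is_ideal_def)
lemma ideal_add: "is_ideal I \<Longrightarrow> x \<in> I \<Longrightarrow> y \<in> I \<Longrightarrow> x + y \<in> I" by (simp add: is_ideal_def)
lemma ideal_multL: "is_ideal I \<Longrightarrow> x \<in> I \<Longrightarrow> r * x \<in> I" by (simp add: is_ideal_def)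
lemma ideal_multR: "is_ideal I \<Longrightarrow> x \<in> I \<Longrightarrow> x * r \<in> I"
  using ideal_multL[of I x r] by (simp add: mult.commute)
lemma ideal_neg: "is_ideal I \<Longrightarrow> x \<in> I \<Longrightarrow> - x \<in> I"
  using ideal_multL[of I x "-1"] by simp
lemma ideal_diff: "is_ideal I \<Longrightarrow> x \<in> I \<Longrightarrow> y \<in> I \<Longrightarrow> x - y \<in> I"
  using ideal_add[of I x "-y"] ideal_neg[of I y] by simp
lemma ideal_1: "is_ideal I \<Longrightarrow> 1 \<in> I \<Longrightarrow> I = UNIV"
  using ideal_multL[of I 1] by auto

lemma prime_is_ideal: "prime_ideal Q \<Longrightarrow> is_ideal Q" by (simp add: prime_ideal_def)
lemma prime_1: "prime_ideal Q \<Longrightarrow> 1 \<notin> Q"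
  using ideal_1 prime_ideal_def by blast
lemma prime_mult: "prime_ideal Q \<Longrightarrow> s \<notin> Q \<Longrightarrow> t \<notin> Q \<Longrightarrow> s * t \<notin> Q"
  by (auto simp: prime_ideal_def)
lemma prime_nz: "prime_ideal Q \<Longrightarrow> s \<notin> Q \<Longrightarrow> s \<noteq> 0"
  using ideal_0 prime_is_ideal by blast

lemma maximal_prime:
  fixes M :: "'a::comm_ring_1 set"
  assumes "maximal_ideal M"
  shows "prime_ideal M"
proof -
  have M: "is_ideal M" "M \<noteq> UNIV" using assms by (auto simp: maximal_ideal_def)
  have "a \<in> M \<or> b \<in> M" if ab: "a * b \<in> M" for a b
  proof (rule ccontr)
    assume na: "\<not> (a \<in> M \<or> b \<in> M)"
    define J where "J = {m + a * r | m r. m \<in> M}"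
    have "is_ideal J"
      unfolding is_ideal_def
    proof (intro conjI ballI allI)
      show "0 \<in> J" unfolding J_def using ideal_0[OF M(1)] by (auto intro!: exI[of _ 0])
    next
      fix x y assume "x \<in> J" "y \<in> J"
      then obtain m1 r1 m2 r2 where "x = m1 + a * r1" "y = m2 + a * r2" "m1 \<in> M" "m2 \<in> M"
        unfolding J_def by blast
      then show "x + y \<in> J" unfolding J_def using ideal_add[OF M(1)]
        by (intro CollectI exI[of _ "m1 + m2"] exI[of _ "r1 + r2"]) (auto simp: algebra_simps)
    next
      fix x r assume "x \<in> J"
      then obtain m1 r1 where "x = m1 + a * r1" "m1 \<in> M" unfolding J_def by blast
      then show "r * x \<in> J" unfolding J_def using ideal_multL[OF M(1)]
        by (intro CollectI exI[of _ "r * m1"] exI[of _ "r * r1"]) (auto simp: algebra_simps)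
    qed
    moreover have "M \<subseteq> J"
    proof
      fix x assume "x \<in> M"
      then show "x \<in> J" unfolding J_def by (intro CollectI exI[of _ x] exI[of _ 0]) simp
    qed
    moreover have "a \<in> J" unfolding J_def using ideal_0[OF M(1)]
      by (intro CollectI exI[of _ 0] exI[of _ 1]) auto
    ultimately have "J = UNIV" using assms na unfolding maximal_ideal_def by blast
    then obtain m r where mr: "1 = m + a * r" "m \<in> M" unfolding J_def by blast
    have "b = b * m + (a * b) * r" using mr(1) by (metis distrib_left mult.assoc mult.commute mult.right_neutral)
    moreover have "b * m + (a * b) * r \<in> M"
      using ideal_add[OF M(1)] ideal_multL[OF M(1)] ideal_multR[OF M(1)] mr(2) ab by blast
    ultimately show False using na by simp
  qed
  then show ?thesis using M by (auto simp: prime_ideal_def)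
qed

subsection \<open>Localizations\<close>

lemma loc_mem: "s \<notin> Q \<Longrightarrow> FR a s \<in> localization Q"
  unfolding localization_def by blast

lemma loc_cases:
  assumes "x \<in> localization Q"
  obtains a s where "x = FR a s" "s \<notin> Q"
  using assms unfolding localization_def by blast

lemma overring_loc:
  assumes "prime_ideal Q"
  shows "overring (localization Q)"
proof -
  have n1: "1 \<notin> Q" using prime_1[OF assms] .
  have emb: "emb a \<in> localization Q" for a unfolding emb_def using n1 by (rule loc_mem)
  have add: "x + y \<in> localization Q" "x * y \<in> localization Q"
    if xy: "x \<in> localization Q" "y \<in> localization Q" for x y
  proof -
    obtain a s where x: "x = FR a s" "s \<notin> Q" using xy(1) unfolding localization_def by blast
    obtain b t where y: "y = FR b t" "t \<notin> Q" using xy(2) unfolding localization_def by blast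
    have st: "s * t \<notin> Q" using prime_mult[OF assms x(2) y(2)] .
    have "s \<noteq> 0" "t \<noteq> 0" using prime_nz[OF assms] x y by auto
    then show "x + y \<in> localization Q" "x * y \<in> localization Q"
      using x y st by (auto intro: loc_mem)
  qed
  have neg: "- x \<in> localization Q" if "x \<in> localization Q" for x
    using that by (auto elim!: loc_cases intro: loc_mem)
  have "0 \<in> localization Q" "1 \<in> localization Q" using emb[of 0] emb[of 1] by auto
  then show ?thesis unfolding overring_def using emb add neg by auto
qed

lemma overring_sum:
  assumes "overring R" "finite S" "\<forall>i\<in>S. f i \<in> R"
  shows "sum f S \<in> R"
  using assms(2,3) by (induction S rule: finite_induct) (use assms(1) in \<open>auto simp: overring_def\<close>)

lemma overring_mult: "overring R \<Longrightarrow> x \<in> R \<Longrightarrow> y \<in> R \<Longrightarrow> x * y \<in> R"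
  by (simp add: overring_def)
lemma overring_add: "overring R \<Longrightarrow> x \<in> R \<Longrightarrow> y \<in> R \<Longrightarrow> x + y \<in> R"
  by (simp add: overring_def)
lemma overring_emb: "overring R \<Longrightarrow> emb a \<in> R"
  by (auto simp: overring_def)
lemma overring_1: "overring R \<Longrightarrow> 1 \<in> R"
  by (auto simp: overring_def)
lemma overring_0: "overring R \<Longrightarrow> 0 \<in> R"
  by (auto simp: overring_def)

subsection \<open>Polynomial overrings\<close>

definition polyring :: "'a::idom fract set \<Rightarrow> 'a fract \<Rightarrow> 'a fract set" where
  "polyring R z = {poly f z | f. \<forall>i. coeff f i \<in> R}"

lemma polyring_const: "overring R \<Longrightarrow> r \<in> R \<Longrightarrow> r \<in> polyring R z"
  unfolding polyring_def
  by (rule CollectI, rule exI[of _ "[:r:]"]) (auto simp: coeff_pCons overring_0 split: nat.split)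

lemma polyring_var: "overring R \<Longrightarrow> z \<in> polyring R z"
  unfolding polyring_def
  by (rule CollectI, rule exI[of _ "[:0, 1:]"])
     (auto simp: coeff_pCons overring_0 overring_1 split: nat.split)

lemma overring_polyring:
  assumes R: "overring R"
  shows "overring (polyring R z)"
proof -
  have mult: "poly f z * poly g z \<in> polyring R z"
    if "\<forall>i. coeff f i \<in> R" "\<forall>i. coeff g i \<in> R" for f g
  proof -
    have "\<forall>n. coeff (f * g) n \<in> R"
      unfolding coeff_mult using that R by (auto intro!: overring_sum overring_mult)
    then show ?thesis unfolding polyring_def by (auto intro!: exI[of _ "f * g"])
  qed
  have add: "poly f z + poly g z \<in> polyring R z"
    if "\<forall>i. coeff f i \<in> R" "\<forall>i. coeff g i \<in> R" for f g
  proof -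
    have "\<forall>n. coeff (f + g) n \<in> R" using that R by (auto intro!: overring_add)
    then show ?thesis unfolding polyring_def by (auto intro!: exI[of _ "f + g"])
  qed
  have neg: "- poly f z \<in> polyring R z"
    if "\<forall>i. coeff f i \<in> R" for f
  proof -
    have "\<forall>n. coeff (- f) n \<in> R" using that R by (auto simp: overring_def)
    then show ?thesis unfolding polyring_def by (auto intro!: exI[of _ "- f"])
  qed
  show ?thesis
    unfolding overring_def
  proof (intro conjI ballI)
    show "range emb \<subseteq> polyring R z" using polyring_const[OF R] overring_emb[OF R] by blast
    show "0 \<in> polyring R z" using polyring_const[OF R] overring_0[OF R] by blast
    show "1 \<in> polyring R z" using polyring_const[OF R] overring_1[OF R] by blast
  next
    fix x y assume "x \<in> polyring R z" "y \<in> polyring R z"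
    then obtain f g where "x = poly f z" "\<forall>i. coeff f i \<in> R" "y = poly g z" "\<forall>i. coeff g i \<in> R"
      unfolding polyring_def by blast
    then show "x + y \<in> polyring R z" "x * y \<in> polyring R z" using mult add by auto
  next
    fix x assume "x \<in> polyring R z"
    then obtain f where "x = poly f z" "\<forall>i. coeff f i \<in> R"
      unfolding polyring_def by blast
    then show "- x \<in> polyring R z" using neg by auto
  qed
qed

lemma ext_polyring:
  assumes R: "overring R" and w: "w \<in> ext_ideal P (polyring R z)"
  shows "\<exists>F. (\<forall>i. coeff F i \<in> ext_ideal P R) \<and> w = poly F z"
  using w
proof (induction rule: ext_induct)
  case zero then show ?case by (auto intro!: exI[of _ 0] ext_0)
next
  case (gen a b)
  then obtain f where f: "b = poly f z" "\<forall>i. coeff f i \<in> R" unfolding polyring_def by blast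
  then show ?case by (auto intro!: exI[of _ "smult (emb a) f"] ext_gen gen(1))
next
  case (add x y)
  then obtain F G where "\<forall>i. coeff F i \<in> ext_ideal P R" "x = poly F z"
       "\<forall>i. coeff G i \<in> ext_ideal P R" "y = poly G z" by blast
  then show ?case by (auto intro!: exI[of _ "F + G"] ext_add)
qed



lemma ext_loc_form:
  assumes P: "is_ideal P" and M: "prime_ideal M"
    and x: "x \<in> ext_ideal P (localization M)"
  shows "\<exists>q t. q \<in> P \<and> t \<notin> M \<and> x = FR q t"
  using x
proof (induction rule: ext_induct)
  case zero
  have "(0::'a fract) = FR 0 1" by (simp add: fract_collapse)
  then show ?case using ideal_0[OF P] prime_1[OF M] by blast
next
  case (gen a b)
  then obtain c s where b: "b = FR c s" "s \<notin> M" unfolding localization_def by blast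
  have "emb a * b = FR (c * a) s" using b by (simp add: emb_Fract mult.commute)
  then show ?case using ideal_multL[OF P gen(1)] b(2) by blast
next
  case (add x y)
  then obtain q1 t1 q2 t2 where q: "q1 \<in> P" "t1 \<notin> M" "x = FR q1 t1" "q2 \<in> P" "t2 \<notin> M" "y = FR q2 t2"
    by blast
  have nz: "t1 \<noteq> 0" "t2 \<noteq> 0" using prime_nz[OF M] q by auto
  have "x + y = FR (q1 * t2 + q2 * t1) (t1 * t2)" using q nz by simp
  moreover have "q1 * t2 + q2 * t1 \<in> P" using q P ideal_add ideal_multR by blast
  moreover have "t1 * t2 \<notin> M" using prime_mult[OF M] q by blast
  ultimately show ?case by blast
qed

lemma ext_loc_sub:
  assumes P: "is_ideal P" and M: "prime_ideal M"
  shows "ext_ideal P (localization M) \<subseteq> localization M"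
  using ext_loc_form[OF P M] loc_mem by blast

lemma ext_loc_unit:
  assumes P: "is_ideal P" and M: "prime_ideal M" and PM: "P \<subseteq> M"
    and c: "c \<in> ext_ideal P (localization M)"
  shows "\<exists>u\<in>localization M. u * (1 - c) = 1"
proof -
  obtain q t where q: "q \<in> P" "t \<notin> M" "c = FR q t" using ext_loc_form[OF P M c] by blast
  have tq: "t - q \<notin> M"
  proof
    assume "t - q \<in> M"
    then have "(t - q) + q \<in> M" using q PM ideal_add[OF prime_is_ideal[OF M]] by blast
    then show False using q by simp
  qed
  have nz: "t \<noteq> 0" "t - q \<noteq> 0" using prime_nz[OF M q(2)] prime_nz[OF M tq] by auto
  have "FR t (t - q) * (1 - FR q t) = 1"
    using nz by (simp add: One_fract_def eq_fract)
  then show ?thesis using loc_mem[OF tq] q(3) by blast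
qed

lemma loc_ext:
  assumes P: "prime_ideal P" and M: "prime_ideal M"
    and p: "p \<in> P" and s: "s \<notin> P" and y: "FR p s \<in> localization M"
  shows "FR p s \<in> ext_ideal P (localization M)"
proof -
  obtain c d where cd: "FR p s = FR c d" "d \<notin> M" using y unfolding localization_def by blast
  have nz: "s \<noteq> 0" "d \<noteq> 0" using prime_nz[OF P s] prime_nz[OF M cd(2)] by auto
  have "p * d = c * s" using cd(1) nz eq_fract(1) by blast
  moreover have "p * d \<in> P" using ideal_multR[OF prime_is_ideal[OF P] p] .
  ultimately have "c * s \<in> P" by simp
  then have c: "c \<in> P" using s P by (auto simp: prime_ideal_def)
  have "FR p s = emb c * FR 1 d" using cd(1) by (simp add: emb_Fract)
  then show ?thesis using ext_gen[OF c loc_mem[OF cd(2)]] by simp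
qed

lemma poly_sum_lessThan:
  fixes p :: "'b::comm_semiring_1 poly"
  assumes "\<forall>i\<ge>n. coeff p i = 0"
  shows "poly p x = (\<Sum>i<n. coeff p i * x ^ i)"
proof (cases "n = 0")
  case True
  then have "p = 0" using assms by (intro poly_eqI) simp
  then show ?thesis using True by simp
next
  case False
  have dg: "degree p \<le> n - 1" using assms False by (intro degree_le) auto
  have "poly p x = (\<Sum>i\<le>degree p. coeff p i * x ^ i)" by (rule poly_altdef)
  also have "\<dots> = (\<Sum>i<n. coeff p i * x ^ i)"
    using dg False by (intro sum.mono_neutral_left) (auto simp: coeff_eq_0)
  finally show ?thesis .
qed



lemma set_sum_closed:
  fixes R :: "'b::comm_monoid_add set"
  assumes "0 \<in> R" "\<forall>x\<in>R. \<forall>y\<in>R. x + y \<in> R" "finite S" "\<forall>i\<in>S. f i \<in> R"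
  shows "sum f S \<in> R"
  using assms(3,4) by (induction S rule: finite_induct) (use assms(1,2) in auto)

lemma nakayama:
  fixes R I :: "'b::field set" and g :: "nat \<Rightarrow> 'b"
  assumes R0: "0 \<in> R" and Radd: "\<forall>x\<in>R. \<forall>y\<in>R. x + y \<in> R" and Rmult: "\<forall>x\<in>R. \<forall>y\<in>R. x * y \<in> R"
    and IR: "I \<subseteq> R" and Iadd: "\<forall>x\<in>I. \<forall>y\<in>I. x + y \<in> I" and Imult: "\<forall>x\<in>I. \<forall>r\<in>R. r * x \<in> I"
    and Iunit: "\<forall>a\<in>I. \<exists>u\<in>R. u * (1 - a) = 1"
    and J: "finite J"
  shows "(\<forall>i\<in>J. \<exists>c a. c \<in> R \<and> (\<forall>j\<in>J. a j \<in> I) \<and> g i = c + (\<Sum>j\<in>J. a j * g j))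
     \<Longrightarrow> (\<forall>i\<in>J. g i \<in> R)"
  using J
proof (induction J rule: finite_induct)
  case empty then show ?case by simp
next
  case (insert k J)
  from insert.prems obtain C A where CA: "\<forall>i\<in>insert k J. C i \<in> R \<and> (\<forall>j\<in>insert k J. A i j \<in> I) \<and>
      g i = C i + (\<Sum>j\<in>insert k J. A i j * g j)"
    by metis
  have sum_ins: "(\<Sum>j\<in>insert k J. A i j * g j) = A i k * g k + (\<Sum>j\<in>J. A i j * g j)" for i
    using insert.hyps by simp
  have CR: "C i \<in> R" if "i \<in> insert k J" for i using CA that by blast
  have AI: "A i j \<in> I" if "i \<in> insert k J" "j \<in> insert k J" for i j using CA that by blast
  have AR: "A i j \<in> R" if "i \<in> insert k J" "j \<in> insert k J" for i j using AI that IR by blast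
  obtain u where u: "u \<in> R" "u * (1 - A k k) = 1" using Iunit AI[of k k] by blast
  have gk0: "g k = C k + A k k * g k + (\<Sum>j\<in>J. A k j * g j)"
  proof -
    have "g k = C k + (\<Sum>j\<in>insert k J. A k j * g j)" using CA by blast
    then show ?thesis unfolding sum_ins[of k] by (simp add: add.assoc)
  qed
  have gk: "g k = u * C k + (\<Sum>j\<in>J. (u * A k j) * g j)"
  proof -
    have eq: "(1 - A k k) * g k = C k + (\<Sum>j\<in>J. A k j * g j)" using gk0 by (simp add: algebra_simps)
    have "g k = (u * (1 - A k k)) * g k" using u(2) by simp
    also have "\<dots> = u * ((1 - A k k) * g k)" by (rule mult.assoc)
    also have "\<dots> = u * C k + (\<Sum>j\<in>J. (u * A k j) * g j)"
      unfolding eq by (simp add: distrib_left sum_distrib_left mult.assoc)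
    finally show ?thesis .
  qed
  have rel: "\<forall>i\<in>J. \<exists>c a. c \<in> R \<and> (\<forall>j\<in>J. a j \<in> I) \<and> g i = c + (\<Sum>j\<in>J. a j * g j)"
  proof
    fix i assume i: "i \<in> J"
    have gi0: "g i = C i + (\<Sum>j\<in>insert k J. A i j * g j)" using CA i by blast
    have "g i = C i + A i k * g k + (\<Sum>j\<in>J. A i j * g j)" using gi0 unfolding sum_ins[of i] by (simp add: add.assoc)
    also have "\<dots> = (C i + A i k * (u * C k)) + (\<Sum>j\<in>J. (A i j + A i k * (u * A k j)) * g j)"
      by (subst gk) (simp add: algebra_simps sum.distrib sum_distrib_left)
    finally have eq: "g i = (C i + A i k * (u * C k)) + (\<Sum>j\<in>J. (A i j + A i k * (u * A k j)) * g j)" .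
    have c: "C i + A i k * (u * C k) \<in> R"
      using CR[of i] CR[of k] i u AR[of i k] Radd Rmult by simp
    have a: "\<forall>j\<in>J. A i j + A i k * (u * A k j) \<in> I"
    proof
      fix j assume j: "j \<in> J"
      have "u * A k j \<in> I" using Imult AI[of k j] u j by simp
      then have "A i k * (u * A k j) \<in> I" using Imult AR[of i k] i by simp
      then show "A i j + A i k * (u * A k j) \<in> I" using Iadd AI[of i j] i j by simp
    qed
    show "\<exists>c a. c \<in> R \<and> (\<forall>j\<in>J. a j \<in> I) \<and> g i = c + (\<Sum>j\<in>J. a j * g j)"
      using eq c a by (intro exI[of _ "C i + A i k * (u * C k)"] exI[of _ "\<lambda>j. A i j + A i k * (u * A k j)"]) auto
  qed
  have gJ: "\<forall>i\<in>J. g i \<in> R" using insert.IH rel by blast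
  have "g k \<in> R"
  proof -
    have "(\<Sum>j\<in>J. (u * A k j) * g j) \<in> R"
      using set_sum_closed[OF R0 Radd insert.hyps(1)] gJ AR u Rmult by simp
    moreover have "u * C k \<in> R" using u CR[of k] Rmult by simp
    ultimately show ?thesis using gk Radd by metis
  qed
  then show ?case using gJ by simp
qed

lemma reduce:
  fixes y :: "'b::field" and C R :: "'b set"
  assumes C0: "0 \<in> C" and Cadd: "\<forall>x\<in>C. \<forall>z\<in>C. x + z \<in> C"
    and Ch: "\<forall>x\<in>C. \<forall>i. x * coeff h i \<in> C"
    and h: "y ^ n = poly h y" "\<forall>i\<ge>n. coeff h i = 0"
  shows "(\<forall>i. coeff g i \<in> C) \<Longrightarrow> \<exists>r. (\<forall>i. coeff r i \<in> C) \<and> (\<forall>i\<ge>n. coeff r i = 0) \<and> poly g y = poly r y"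
proof (induction "degree g" arbitrary: g rule: less_induct)
  case less
  show ?case
  proof (cases "\<forall>i\<ge>n. coeff g i = 0")
    case True then show ?thesis using less.prems by blast
  next
    case False
    then obtain i where i: "i \<ge> n" "coeff g i \<noteq> 0" by blast
    have n0: "n \<noteq> 0"
    proof
      assume "n = 0"
      then have "h = 0" using h(2) by (intro poly_eqI) simp
      then show False using h(1) \<open>n = 0\<close> by simp
    qed
    define d where "d = degree g"
    have dn: "d \<ge> n" using le_degree[OF i(2)] i(1) unfolding d_def by simp
    define c where "c = coeff g d"
    define g' where "g' = g - monom c d + monom c (d - n) * h"
    have cC: "c \<in> C" using less.prems unfolding c_def by blast
    have g'C: "\<forall>j. coeff g' j \<in> C"
    proof
      fix j
      have "coeff (g - monom c d) j = (if j = d then 0 else coeff g j)"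
        by (simp add: c_def)
      moreover have "coeff (monom c (d - n) * h) j = (if j < d - n then 0 else c * coeff h (j - (d - n)))"
        by (rule coeff_monom_mult)
      ultimately have "coeff g' j = (if j = d then 0 else coeff g j) + (if j < d - n then 0 else c * coeff h (j - (d - n)))"
        unfolding g'_def by simp
      then show "coeff g' j \<in> C" using less.prems C0 Cadd Ch cC by auto
    qed
    have "\<forall>j>d - 1. coeff g' j = 0"
    proof (intro allI impI)
      fix j assume j: "j > d - 1"
      then have jd: "j \<ge> d" using dn n0 by simp
      have "coeff (g - monom c d) j = 0"
        using jd by (cases "j = d") (auto simp: c_def d_def coeff_eq_0)
      moreover have "coeff (monom c (d - n) * h) j = 0"
        using jd h(2) dn by (simp add: coeff_monom_mult)
      ultimately show "coeff g' j = 0" unfolding g'_def by simp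
    qed
    then have "degree g' \<le> d - 1" by (rule degree_le)
    then have deg: "degree g' < degree g" using dn n0 unfolding d_def by simp
    have "poly g' y = poly g y - c * y ^ d + c * y ^ (d - n) * y ^ n"
      unfolding g'_def using h(1) by (simp add: poly_monom)
    also have "c * y ^ (d - n) * y ^ n = c * y ^ d"
      using dn by (simp add: mult.assoc power_add[symmetric])
    finally have pg: "poly g' y = poly g y" by simp
    obtain r where "(\<forall>i. coeff r i \<in> C) \<and> (\<forall>i\<ge>n. coeff r i = 0) \<and> poly g' y = poly r y"
      using less.hyps[OF deg g'C] by blast
    then show ?thesis using pg by auto
  qed
qed



lemma straightD:
  assumes "straight P" "overring B" "a \<notin> P" "b \<in> B" "emb a * b \<in> ext_ideal P B"
  shows "b \<in> ext_ideal P B"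
  using assms unfolding straight_def by blast

lemma key:
  fixes P M :: "'a::idom set"
  assumes P: "prime_ideal P" and M: "maximal_ideal M" and PM: "P \<subseteq> M" and st: "straight P"
    and p: "p \<in> P" and s: "s \<notin> P"
  shows "FR p s \<in> localization M"
proof -
  have Mp: "prime_ideal M" using maximal_prime[OF M] .
  have Pi: "is_ideal P" using prime_is_ideal[OF P] .
  define R where "R = localization M"
  define I where "I = ext_ideal P R"
  have R: "overring R" unfolding R_def using overring_loc[OF Mp] .
  have s0: "s \<noteq> 0" using prime_nz[OF P s] .
  show ?thesis
  proof (cases "p = 0")
    case True
    then show ?thesis using overring_0[OF R] unfolding R_def by (simp add: fract_collapse)
  next
    case False
    define y where "y = FR p s"
    define x where "x = FR s p"
    have y0: "y \<noteq> 0" unfolding y_def using False s0 by (simp add: Zero_fract_def eq_fract)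
    have xinv: "inverse y = x" unfolding x_def y_def by simp
    have IR: "I \<subseteq> R" unfolding I_def R_def using ext_loc_sub[OF Pi Mp] .
    have I0: "0 \<in> I" unfolding I_def by (rule ext_0)
    have Iadd: "\<forall>a\<in>I. \<forall>b\<in>I. a + b \<in> I" unfolding I_def using ext_add by blast
    have IRm: "a * r \<in> I" if "a \<in> I" "r \<in> R" for a r
      using ext_mult[of a P R r] that R unfolding I_def overring_def by blast
    have Iunit: "\<forall>a\<in>I. \<exists>u\<in>R. u * (1 - a) = 1"
      unfolding I_def R_def using ext_loc_unit[OF Pi Mp PM] by blast
    \<comment> \<open>Step 1: integrality of y\<close>
    define B1 where "B1 = polyring R x"
    have B1: "overring B1" unfolding B1_def using overring_polyring[OF R] .
    have "emb s * 1 = emb p * x" unfolding x_def using False by (simp add: emb_Fract eq_fract emb_def)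
    also have "\<dots> \<in> ext_ideal P B1" unfolding B1_def using ext_gen[OF p polyring_var[OF R]] .
    finally have "1 \<in> ext_ideal P B1"
      using straightD[OF st B1 s overring_1[OF B1]] by blast
    then obtain F where F: "\<forall>i. coeff F i \<in> I" "1 = poly F x"
      using ext_polyring[OF R] unfolding B1_def I_def by blast
    define n where "n = degree F"
    define G where "G = reflect_poly F"
    have Gy: "poly G y = y ^ n"
      unfolding G_def n_def using poly_reflect_poly_nz[OF y0, of F] F(2) xinv by simp
    have GI: "\<forall>i. coeff G i \<in> I" unfolding G_def using F(1) I0 by (simp add: coeff_reflect_poly)
    have Gn: "\<forall>i>n. coeff G i = 0" unfolding G_def n_def by (simp add: coeff_reflect_poly)
    define c0 where "c0 = coeff G n"
    have c0I: "c0 \<in> I" unfolding c0_def using GI by blast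
    define h0 where "h0 = G - monom c0 n"
    have h0y: "poly h0 y = y ^ n - c0 * y ^ n" unfolding h0_def using Gy by (simp add: poly_monom)
    have h0c: "coeff h0 i = (if i = n then 0 else coeff G i)" for i
      unfolding h0_def c0_def by simp
    have h0I: "\<forall>i. coeff h0 i \<in> I" using h0c GI I0 by simp
    have h0n: "\<forall>i\<ge>n. coeff h0 i = 0" using h0c Gn by (auto simp: le_less)
    obtain u where u: "u \<in> R" "u * (1 - c0) = 1" using Iunit c0I by blast
    define h where "h = smult u h0"
    have hy: "y ^ n = poly h y"
    proof -
      have "poly h y = u * (y ^ n - c0 * y ^ n)" unfolding h_def by (simp only: poly_smult h0y)
      also have "\<dots> = u * (1 - c0) * y ^ n" by (simp add: algebra_simps)
      finally have "poly h y = u * (1 - c0) * y ^ n" .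
      then show ?thesis using u(2) by simp
    qed
    have hR: "\<forall>i. coeff h i \<in> R"
      unfolding h_def using h0I IR u(1) overring_mult[OF R] by auto
    have hn: "\<forall>i\<ge>n. coeff h i = 0" unfolding h_def using h0n by simp
    have n0: "n \<noteq> 0"
    proof
      assume "n = 0"
      then have "h = 0" using hn by (intro poly_eqI) simp
      then show False using hy \<open>n = 0\<close> by simp
    qed
    \<comment> \<open>Step 2: y lies in P R[y]\<close>
    define B2 where "B2 = polyring R y"
    have B2: "overring B2" unfolding B2_def using overring_polyring[OF R] .
    have yB2: "y \<in> B2" unfolding B2_def using polyring_var[OF R] .
    have "emb s * y = emb p * 1" unfolding y_def using s0 by (simp add: emb_Fract eq_fract emb_def)
    also have "\<dots> \<in> ext_ideal P B2" using ext_gen[OF p overring_1[OF B2]] .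
    finally have yP: "y \<in> ext_ideal P B2" using straightD[OF st B2 s yB2] by blast
    have pw: "y ^ Suc k \<in> ext_ideal P B2" for k
    proof (induction k)
      case 0 then show ?case using yP by simp
    next
      case (Suc k)
      have "y ^ Suc k * y \<in> ext_ideal P B2"
        using ext_mult[OF Suc yB2] B2 unfolding overring_def by blast
      then show ?case by (simp add: mult.commute)
    qed
    have Ch: "\<forall>a\<in>I. \<forall>i. a * coeff h i \<in> I" using IRm hR by blast
    have red: "\<exists>r. (\<forall>i. coeff r i \<in> I) \<and> (\<forall>i\<ge>n. coeff r i = 0) \<and> y ^ k = poly r y"
      if k: "k \<ge> 1" for k
    proof -
      obtain k' where k': "k = Suc k'" using k by (cases k) auto
      obtain Fk where Fk: "\<forall>i. coeff Fk i \<in> I" "y ^ k = poly Fk y"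
        using ext_polyring[OF R, of "y ^ k" P y] pw[of k'] k' unfolding B2_def I_def by blast
      obtain r where "(\<forall>i. coeff r i \<in> I) \<and> (\<forall>i\<ge>n. coeff r i = 0) \<and> poly Fk y = poly r y"
        using reduce[OF I0 Iadd Ch hy hn Fk(1)] by blast
      then show ?thesis using Fk(2) by auto
    qed
    have "y \<in> R"
    proof (cases "n = 1")
      case True
      obtain r where r: "\<forall>i. coeff r i \<in> I" "\<forall>i\<ge>n. coeff r i = 0" "y ^ 1 = poly r y"
        using red[of 1] by auto
      have "y = coeff r 0" using r(3) poly_sum_lessThan[OF r(2), of y] True by simp
      then show ?thesis using r(1) IR by auto
    next
      case False
      then have n2: "n \<ge> 2" using n0 by simp
      have rel: "\<forall>i\<in>{1..<n}. \<exists>c a. c \<in> R \<and> (\<forall>j\<in>{1..<n}. a j \<in> I) \<and>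
                   y ^ i = c + (\<Sum>j\<in>{1..<n}. a j * y ^ j)"
      proof
        fix i assume i: "i \<in> {1..<n}"
        obtain r where r: "\<forall>i. coeff r i \<in> I" "\<forall>i\<ge>n. coeff r i = 0" "y ^ i = poly r y"
          using red[of i] i by auto
        have "{..<n} = insert 0 {1..<n}" using n0 by auto
        then have "y ^ i = coeff r 0 + (\<Sum>j\<in>{1..<n}. coeff r j * y ^ j)"
          using r(3) poly_sum_lessThan[OF r(2), of y] by simp
        moreover have "coeff r 0 \<in> R" using r(1) IR by auto
        ultimately show "\<exists>c a. c \<in> R \<and> (\<forall>j\<in>{1..<n}. a j \<in> I) \<and>
                   y ^ i = c + (\<Sum>j\<in>{1..<n}. a j * y ^ j)"
          using r(1) by blast
      qed
      have "\<forall>i\<in>{1..<n}. y ^ i \<in> R"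
        using nakayama[of R I "{1..<n}" "\<lambda>i. y ^ i"] R IR Iadd IRm Iunit rel
        by (auto simp: overring_def mult.commute)
      then show ?thesis using n2 by force
    qed
    then show ?thesis unfolding R_def y_def .
  qed
qed



lemma exists_maximal:
  fixes J :: "'a::comm_ring_1 set"
  assumes J: "is_ideal J" and J1: "1 \<notin> J"
  shows "\<exists>M. maximal_ideal M \<and> J \<subseteq> M"
proof -
  define \<A> where "\<A> = {I. is_ideal I \<and> J \<subseteq> I \<and> 1 \<notin> I}"
  have "\<forall>C\<in>chains \<A>. \<exists>U\<in>\<A>. \<forall>X\<in>C. X \<subseteq> U"
  proof
    fix C assume C: "C \<in> chains \<A>"
    show "\<exists>U\<in>\<A>. \<forall>X\<in>C. X \<subseteq> U"
    proof (cases "C = {}")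
      case True then show ?thesis using J J1 unfolding \<A>_def by auto
    next
      case False
      have CA: "C \<subseteq> \<A>" and ch: "\<forall>X\<in>C. \<forall>Y\<in>C. X \<subseteq> Y \<or> Y \<subseteq> X"
        using C unfolding chains_def chain_subset_def by auto
      have "is_ideal (\<Union>C)"
        unfolding is_ideal_def
      proof (intro conjI ballI allI)
        obtain X where "X \<in> C" using False by blast
        then show "0 \<in> \<Union>C" using CA unfolding \<A>_def is_ideal_def by blast
      next
        fix x y assume "x \<in> \<Union>C" "y \<in> \<Union>C"
        then obtain X Y where XY: "X \<in> C" "Y \<in> C" "x \<in> X" "y \<in> Y" by blast
        then have "X \<subseteq> Y \<or> Y \<subseteq> X" using ch by blast
        then show "x + y \<in> \<Union>C"
          using XY CA unfolding \<A>_def is_ideal_def by blast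
      next
        fix x r assume "x \<in> \<Union>C"
        then obtain X where "X \<in> C" "x \<in> X" by blast
        then show "r * x \<in> \<Union>C" using CA unfolding \<A>_def is_ideal_def by blast
      qed
      moreover have "J \<subseteq> \<Union>C" using False CA unfolding \<A>_def by blast
      moreover have "1 \<notin> \<Union>C" using CA unfolding \<A>_def by blast
      ultimately show ?thesis unfolding \<A>_def by blast
    qed
  qed
  then obtain M where M: "M \<in> \<A>" "\<forall>X\<in>\<A>. M \<subseteq> X \<longrightarrow> X = M" using Zorn_Lemma2 by blast
  have "maximal_ideal M"
    unfolding maximal_ideal_def
  proof (intro conjI allI impI)
    show "is_ideal M" using M unfolding \<A>_def by blast
    show "M \<noteq> UNIV" using M unfolding \<A>_def by blast
  next
    fix K assume K: "is_ideal K \<and> M \<subseteq> K"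
    show "K = M \<or> K = UNIV"
    proof (cases "1 \<in> K")
      case True then show ?thesis using ideal_1 K by blast
    next
      case False
      then have "K \<in> \<A>" using K M unfolding \<A>_def by blast
      then show ?thesis using M K by blast
    qed
  qed
  then show ?thesis using M unfolding \<A>_def by blast
qed

lemma ld_imp_straight:
  fixes P :: "'a::idom set"
  assumes P: "prime_ideal P" and ld: "locally_divided P"
  shows "straight P"
  unfolding straight_def
proof (intro allI impI)
  fix B a b
  assume B: "overring B" and a: "a \<notin> P" and b: "b \<in> B" and ab: "emb a * b \<in> ext_ideal P B"
  have Pi: "is_ideal P" using prime_is_ideal[OF P] .
  have a0: "a \<noteq> 0" using prime_nz[OF P a] .
  define E where "E = ext_ideal P B"
  have Bm: "\<forall>u\<in>B. \<forall>v\<in>B. u * v \<in> B" using B unfolding overring_def by blast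
  define J where "J = {c. emb c * b \<in> E}"
  have EmbB: "emb r * w \<in> E" if "w \<in> E" for r w
    using ext_mult[of w P B "emb r"] that Bm overring_emb[OF B] unfolding E_def by (simp add: mult.commute)
  have J: "is_ideal J"
    unfolding is_ideal_def J_def
  proof (intro conjI ballI allI; clarsimp)
    show "0 \<in> E" unfolding E_def by (rule ext_0)
  next
    fix x y assume "emb x * b \<in> E" "emb y * b \<in> E"
    then show "emb (x + y) * b \<in> E" unfolding E_def by (simp add: emb_add distrib_right ext_add)
  next
    fix x r assume "emb x * b \<in> E"
    then show "emb (r * x) * b \<in> E" using EmbB by (simp add: emb_mult mult.assoc)
  qed
  show "b \<in> ext_ideal P B"
  proof (cases "1 \<in> J")
    case True then show ?thesis unfolding J_def E_def by simp
  next
    case False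
    obtain M where M: "maximal_ideal M" "J \<subseteq> M" using exists_maximal[OF J False] by blast
    have Mp: "prime_ideal M" using maximal_prime[OF M(1)] .
    have aJ: "a \<in> J" unfolding J_def E_def using ab by simp
    show ?thesis
    proof (cases "P \<subseteq> M")
      case False
      then obtain q where q: "q \<in> P" "q \<notin> M" by blast
      have "q \<in> J" unfolding J_def E_def using ext_gen[OF q(1) b] by simp
      then show ?thesis using q M by blast
    next
      case True
      have eq: "ext_ideal P (localization M) = ext_ideal P (localization P)"
        using ld M True unfolding locally_divided_def by blast
      have "\<exists>t. t \<notin> M \<and> emb t * (FR 1 a * w) \<in> E" if w: "w \<in> E" for w
        using w unfolding E_def
      proof (induction rule: ext_induct)
        case zero
        show ?case using prime_1[OF Mp] ext_0 by (intro exI[of _ 1]) auto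
      next
        case (gen q d)
        have "FR q a = emb q * FR 1 a" by (simp add: emb_Fract)
        also have "\<dots> \<in> ext_ideal P (localization P)" using ext_gen[OF gen(1) loc_mem[OF a]] .
        finally have "FR q a \<in> ext_ideal P (localization M)" using eq by simp
        then obtain q' t where qt: "q' \<in> P" "t \<notin> M" "FR q a = FR q' t"
          using ext_loc_form[OF Pi Mp] by blast
        have t0: "t \<noteq> 0" using prime_nz[OF Mp qt(2)] .
        have "emb t * (FR 1 a * (emb q * d)) = emb t * FR q a * d"
          by (simp add: emb_def ac_simps)
        also have "\<dots> = emb q' * d" using qt(3) t0
          by (simp add: emb_Fract emb_def eq_fract mult.commute)
        finally have "emb t * (FR 1 a * (emb q * d)) = emb q' * d" .
        then show ?case using qt(2) ext_gen[OF qt(1) gen(2)] by metis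
      next
        case (add x y)
        then obtain t1 t2 where t: "t1 \<notin> M" "emb t1 * (FR 1 a * x) \<in> ext_ideal P B"
            "t2 \<notin> M" "emb t2 * (FR 1 a * y) \<in> ext_ideal P B" by blast
        have "emb (t1 * t2) * (FR 1 a * (x + y)) =
              emb t2 * (emb t1 * (FR 1 a * x)) + emb t1 * (emb t2 * (FR 1 a * y))"
          by (simp add: emb_mult algebra_simps)
        also have "\<dots> \<in> ext_ideal P B" using EmbB t unfolding E_def by (blast intro: ext_add)
        finally show ?case using prime_mult[OF Mp t(1) t(3)] by blast
      qed
      then obtain t where t: "t \<notin> M" "emb t * (FR 1 a * (emb a * b)) \<in> E"
        using ab unfolding E_def by blast
      have "FR 1 a * emb a = 1" using a0 by (simp add: emb_def One_fract_def eq_fract)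
      then have "FR 1 a * (emb a * b) = b" by (metis mult.assoc mult_1)
      then have "emb t * b \<in> E" using t(2) by metis
      then have "t \<in> J" unfolding J_def by simp
      then show ?thesis using t M by blast
    qed
  qed
qed

lemma straight_imp_ld:
  fixes P :: "'a::idom set"
  assumes P: "prime_ideal P" and st: "straight P"
  shows "locally_divided P"
  unfolding locally_divided_def
proof (intro allI impI)
  fix M assume M: "maximal_ideal M \<and> P \<subseteq> M"
  have Mp: "prime_ideal M" using maximal_prime M by blast
  have sub: "localization M \<subseteq> localization P"
    using M unfolding localization_def by blast
  show "ext_ideal P (localization M) = ext_ideal P (localization P)"
  proof
    show "ext_ideal P (localization M) \<subseteq> ext_ideal P (localization P)" using ext_mono[OF sub] .
  next
    show "ext_ideal P (localization P) \<subseteq> ext_ideal P (localization M)"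
    proof
      fix w assume "w \<in> ext_ideal P (localization P)"
      then show "w \<in> ext_ideal P (localization M)"
      proof (induction rule: ext_induct)
        case zero then show ?case by (rule ext_0)
      next
        case (gen q d)
        then obtain c s where d: "d = FR c s" "s \<notin> P" unfolding localization_def by blast
        have qc: "q * c \<in> P" using ideal_multR[OF prime_is_ideal[OF P] gen(1)] .
        have "FR (q * c) s \<in> localization M" using key[OF P _ _ st qc d(2)] M by blast
        then have "FR (q * c) s \<in> ext_ideal P (localization M)" using loc_ext[OF P Mp qc d(2)] by blast
        then show ?case using d by (simp add: emb_Fract)
      next
        case (add x y) then show ?case by (rule ext_add)
      qed
    qed
  qed
qed

theorem theorem3p1:
  fixes P :: "'a::idom set"
  assumes "prime_ideal P"
  shows "straight P \<longleftrightarrow> locally_divided P"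
  using straight_imp_ld[OF assms] ld_imp_straight[OF assms] by blast

end
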